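(* Let $y,p\in\mathbb R^2$ and $a,b>0$. For $R\in\mathbb R^{2\times2}$ and $\lambda>0$ define \[ G(R,\lambda):=p^TR^T\begin{pmatrix}\frac{\lambda+1}{a\lambda+b}&0\\0&\frac{\lambda+1}{a+b\lambda}\end{pmatrix}Ry. \] Then \[ \operatorname{cl}G(\mathrm O(2),(0,\infty))=\frac12\Big(\frac1a+\frac1b\Big)y^Tp+[-1,1]\cdot\frac12\Big|\frac1a-\frac1b\Big|\,\|y\|_2\|p\|_2. \]
   Context: $\mathrm O(2)=\{R\in\mathbb R^{2\times2}:R^TR=I_2\}$; $\operatorname{cl}$ denotes closure in $\mathbb R$; $\|\cdot\|_2$ Euclidean norm; $c+[-1,1]\cdot t$ denotes $[c-t,c+t]$. *)

theory Defs
  imports "HOL-Analysis.Analysis"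
begin

definition Dmat :: "real \<Rightarrow> real \<Rightarrow> real \<Rightarrow> real^2^2" where
  "Dmat a b lam = (\<chi> i j. if i = j then (if i = 1 then (lam + 1) / (a * lam + b)
                                           else (lam + 1) / (a + b * lam)) else 0)"

definition Gfun :: "real \<Rightarrow> real \<Rightarrow> real^2 \<Rightarrow> real^2 \<Rightarrow> real^2^2 \<Rightarrow> real \<Rightarrow> real" where
  "Gfun a b y p R lam = p \<bullet> ((transpose R ** Dmat a b lam ** R) *v y)"

end

theory Submission
  imports Defs
begin
lemma G_eq: "Gfun a b y p R lam =
  (lam + 1) / (a * lam + b) * ((R *v p)$1 * (R *v y)$1) + (lam + 1) / (a + b * lam) * ((R *v p)$2 * (R *v y)$2)"
proof -
  have "Gfun a b y p R lam = p \<bullet> ((Dmat a b lam *v (R *v y)) v* R)"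
    unfolding Gfun_def by (simp add: matrix_vector_mul_assoc[symmetric])
  also have "\<dots> = (R *v p) \<bullet> (Dmat a b lam *v (R *v y))"
    by (metis dot_lmul_matrix inner_commute)
  also have "\<dots> = (lam + 1) / (a * lam + b) * ((R *v p)$1 * (R *v y)$1) + (lam + 1) / (a + b * lam) * ((R *v p)$2 * (R *v y)$2)"
    by (simp add: inner_vec_def sum_2 matrix_vector_mult_def Dmat_def mult_ac)
  finally show ?thesis .
qed

lemma inner2: "(u::real^2) \<bullet> w = u$1*w$1 + u$2*w$2" by (simp add: inner_vec_def sum_2)

lemma orth: assumes "orthogonal_matrix (R::real^2^2)" shows "orthogonal_transformation ((*v) R)"
  using assms by (simp add: orthogonal_transformation_matrix)

lemma between: fixes d A B :: real assumes "(d - A) * (d - B) \<le> 0"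
  shows "\<bar>d - (A+B)/2\<bar> \<le> \<bar>A - B\<bar>/2"
proof -
  have "(d - (A+B)/2)^2 = ((A-B)/2)^2 + (d-A)*(d-B)" by (simp add: power2_eq_square field_simps)
  then have "(d - (A+B)/2)^2 \<le> ((A-B)/2)^2" using assms by linarith
  then have "\<bar>d - (A+B)/2\<bar> \<le> \<bar>(A-B)/2\<bar>" using abs_le_square_iff by blast
  then show ?thesis by simp
qed

lemma dbound: fixes a b l :: real assumes "a > 0" "b > 0" "l \<ge> 0"
  shows "\<bar>(l+1)/(a*l+b) - (1/2)*(1/a+1/b)\<bar> \<le> (1/2)*\<bar>1/a-1/b\<bar>"
proof -
  have pos: "a*l+b > 0" using assms by (simp add: add_nonneg_pos)
  have e1: "(l+1)/(a*l+b) - 1/a = (a-b)/(a*(a*l+b))" using pos assms by (simp add: field_simps)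
  have e2: "(l+1)/(a*l+b) - 1/b = l*(b-a)/(b*(a*l+b))" using pos assms by (simp add: field_simps)
  have "((l+1)/(a*l+b) - 1/a) * ((l+1)/(a*l+b) - 1/b) = - (l*(a-b)^2) / ((a*(a*l+b))*(b*(a*l+b)))"
    unfolding e1 e2 by (simp add: power2_eq_square algebra_simps)
  also have "\<dots> \<le> 0" using pos assms by (simp add: divide_nonneg_pos)
  finally have "\<bar>(l+1)/(a*l+b) - (1/a+1/b)/2\<bar> \<le> \<bar>1/a-1/b\<bar>/2" by (rule between)
  then show ?thesis by simp
qed

lemma CS: fixes u v :: "real^2"
  shows "\<bar>u$1* v$1\<bar> + \<bar>u$2* v$2\<bar> \<le> norm u * norm v"
proof -
  have "(\<bar>u$1* v$1\<bar> + \<bar>u$2* v$2\<bar>)^2 \<le> (u$1^2+u$2^2)*(v$1^2+v$2^2)"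
  proof -
    have "2*\<bar>u$1* v$1\<bar>*\<bar>u$2* v$2\<bar> \<le> (u$1* v$2)^2 + (u$2* v$1)^2"
    proof -
      have "0 \<le> (\<bar>u$1* v$2\<bar> - \<bar>u$2* v$1\<bar>)^2" by simp
      also have "\<dots> = (u$1* v$2)^2 + (u$2* v$1)^2 - 2*(\<bar>u$1* v$2\<bar>*\<bar>u$2* v$1\<bar>)"
        by (simp add: power2_diff)
      also have "\<bar>u$1* v$2\<bar>*\<bar>u$2* v$1\<bar> = \<bar>u$1* v$1\<bar>*\<bar>u$2* v$2\<bar>"
        by (simp add: abs_mult)
      finally show ?thesis by simp
    qed
    then show ?thesis by (simp add: power2_eq_square algebra_simps)
  qed
  also have "\<dots> = (norm u * norm v)^2"
  proof -
    have nu: "(norm u)^2 = u$1^2+u$2^2" by (subst power2_norm_eq_inner) (simp add: inner2 power2_eq_square)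
    have nv: "(norm v)^2 = v$1^2+v$2^2" by (subst power2_norm_eq_inner) (simp add: inner2 power2_eq_square)
    show ?thesis by (simp add: power_mult_distrib nu nv)
  qed
  finally show ?thesis by (rule power2_le_imp_le) simp
qed
definition rotm :: "real \<Rightarrow> real^2^2" where
  "rotm t = vector [vector [cos t, - sin t], vector [sin t, cos t]]"

lemma rotm_orth: "orthogonal_matrix (rotm t)"
proof -
  have s: "sin t * sin t + cos t * cos t = 1" "cos t * cos t + sin t * sin t = 1"
    using sin_cos_squared_add[of t] by (simp_all add: power2_eq_square)
  show ?thesis unfolding orthogonal_matrix
    by (simp add: rotm_def vec_eq_iff forall_2 matrix_matrix_mult_def transpose_def mat_def sum_2 s)
qed

lemma rotm_v: "(rotm t *v u)$1 = cos t * u$1 - sin t * u$2" "(rotm t *v u)$2 = sin t * u$1 + cos t * u$2"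
  by (simp_all add: rotm_def matrix_vector_mult_def sum_2)

lemma rot: fixes p y :: "real^2" assumes "\<bar>w\<bar> \<le> norm p * norm y"
  shows "\<exists>R. orthogonal_matrix R \<and> (R *v p)$1 * (R *v y)$1 - (R *v p)$2 * (R *v y)$2 = w"
proof (cases "norm p * norm y = 0")
  case True
  have w: "w = 0" using assms True abs_le_zero_iff by metis
  have "orthogonal_matrix (mat 1 :: real^2^2)" by (simp add: orthogonal_matrix_id)
  moreover have "(mat 1 *v p)$1 * (mat 1 *v y)$1 - (mat 1 *v p)$2 * (mat 1 *v y)$2 = w"
    using True w by auto
  ultimately show ?thesis by blast
next
  case False
  define c where "c = norm p * norm y"
  have cpos: "c > 0" using False c_def by simp
  define A where "A = p$1*y$1 - p$2*y$2"
  define B where "B = p$1*y$2 + p$2*y$1"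
  have nu: "(norm p)^2 = p$1^2+p$2^2" by (subst power2_norm_eq_inner) (simp add: inner2 power2_eq_square)
  have nv: "(norm y)^2 = y$1^2+y$2^2" by (subst power2_norm_eq_inner) (simp add: inner2 power2_eq_square)
  have AB: "A^2 + B^2 = c^2" unfolding c_def A_def B_def power_mult_distrib nu nv
    by (simp add: power2_eq_square algebra_simps)
  have "(A/c)^2 + (-B/c)^2 = 1" using AB cpos by (simp add: power_divide add_divide_distrib[symmetric])
  then obtain psi where psi: "A/c = cos psi" "-B/c = sin psi" by (rule sincos_total_2pi)
  have wc: "-1 \<le> w/c" "w/c \<le> 1" using assms cpos c_def by (auto simp: field_simps abs_le_iff)
  define chi where "chi = arccos (w/c)"
  have chi: "cos chi = w/c" using wc chi_def by simp
  define t where "t = (psi + chi)/2"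
  have "(rotm t *v p)$1 * (rotm t *v y)$1 - (rotm t *v p)$2 * (rotm t *v y)$2
      = A * cos (2*t) - B * sin (2*t)"
    unfolding rotm_v A_def B_def cos_double sin_double by (simp add: power2_eq_square algebra_simps)
  also have "\<dots> = c * (cos psi * cos (psi+chi) + sin psi * sin (psi + chi))"
  proof -
    have t2: "2*t = psi+chi" unfolding t_def by simp
    have A: "A = c * cos psi" and B: "B = - (c * sin psi)" using psi cpos by (simp_all add: field_simps)
    show ?thesis unfolding t2 A B by (simp add: algebra_simps)
  qed
  also have "\<dots> = c * cos chi" by (simp add: cos_diff[symmetric])
  also have "\<dots> = w" using chi cpos by simp
  finally show ?thesis using rotm_orth by blast
qed
theorem mainTheorem14:
  fixes y p :: "real^2" and a b :: real
  assumes "a > 0" and "b > 0"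
  shows "closure {Gfun a b y p R lam | R lam. orthogonal_matrix R \<and> lam > 0} =
    {(1/2) * (1/a + 1/b) * (y \<bullet> p) - (1/2) * \<bar>1/a - 1/b\<bar> * norm y * norm p ..
     (1/2) * (1/a + 1/b) * (y \<bullet> p) + (1/2) * \<bar>1/a - 1/b\<bar> * norm y * norm p}"
  (is "closure ?S = ?I")
proof -
  define M where "M = (1/2) * (1/a + 1/b)"
  define D where "D = (1/2) * \<bar>1/a - 1/b\<bar>"
  define c where "c = norm y * norm p"
  define sp where "sp = y \<bullet> p"
  have I: "?I = {(M * sp - D*c) .. (M * sp + D*c)}" unfolding M_def D_def c_def sp_def by (simp add: mult.assoc)
  have xz: "(R *v p)$1 * (R *v y)$1 + (R *v p)$2 * (R *v y)$2 = sp"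
     "\<bar>(R *v p)$1 * (R *v y)$1\<bar> + \<bar>(R *v p)$2 * (R *v y)$2\<bar> \<le> c"
    if "orthogonal_matrix R" for R
  proof -
    have ot: "orthogonal_transformation ((*v) R)" using orth that by blast
    have "(R *v p) \<bullet> (R *v y) = p \<bullet> y" using ot unfolding orthogonal_transformation_def by blast
    then show "(R *v p)$1 * (R *v y)$1 + (R *v p)$2 * (R *v y)$2 = sp"
      unfolding sp_def inner2[symmetric] by (simp add: inner_commute)
    show "\<bar>(R *v p)$1 * (R *v y)$1\<bar> + \<bar>(R *v p)$2 * (R *v y)$2\<bar> \<le> c"
      using CS[of "R *v p" "R *v y"] orthogonal_transformation_norm[OF ot] unfolding c_def
      by (simp add: mult.commute)
  qed
  have sub: "?S \<subseteq> ?I"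
  proof
    fix g assume "g \<in> ?S"
    then obtain R lam where R: "orthogonal_matrix R" and lam: "lam > 0" and g: "g = Gfun a b y p R lam" by blast
    define x where "x = (R *v p)$1 * (R *v y)$1"
    define z where "z = (R *v p)$2 * (R *v y)$2"
    define d1 where "d1 = (lam + 1) / (a * lam + b)"
    define d2 where "d2 = (lam + 1) / (a + b * lam)"
    have g2: "g = d1 * x + d2 * z" unfolding g G_eq d1_def d2_def x_def z_def by simp
    have sx: "x + z = sp" and cx: "\<bar>x\<bar> + \<bar>z\<bar> \<le> c" using xz[OF R] unfolding x_def z_def by auto
    have b1: "\<bar>d1 - M\<bar> \<le> D" unfolding d1_def M_def D_def using dbound[of a b lam] assms lam by simp
    have b2: "\<bar>d2 - M\<bar> \<le> D" unfolding d2_def M_def D_def using dbound[of b a lam] assms lam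
      by (simp add: add.commute abs_minus_commute)
    have "g - M * sp = (d1 - M)*x + (d2 - M)*z" unfolding g2 sx[symmetric] by (simp add: algebra_simps)
    also have "\<bar>\<dots>\<bar> \<le> \<bar>d1 - M\<bar>*\<bar>x\<bar> + \<bar>d2 - M\<bar>*\<bar>z\<bar>" by (simp add: abs_mult abs_triangle_ineq[THEN order_trans])
    also have "\<dots> \<le> D*\<bar>x\<bar> + D*\<bar>z\<bar>" using b1 b2 by (intro add_mono mult_right_mono) auto
    also have "\<dots> \<le> D*c" using cx b1 by (simp add: distrib_left[symmetric] mult_left_mono)
    finally show "g \<in> ?I" unfolding I by (simp add: abs_le_iff)
  qed
  have "closure ?S \<subseteq> ?I" using sub by (intro closure_minimal) auto
  moreover have "?I \<subseteq> closure ?S"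
  proof
    fix t assume "t \<in> ?I"
    then have t: "\<bar>t - M * sp\<bar> \<le> D*c" unfolding I by (simp add: abs_le_iff)
    obtain w where w: "\<bar>w\<bar> \<le> norm p * norm y" "t = M * sp + (1/b - 1/a)/2 * w"
    proof (cases "a = b")
      case True
      then have "t = M * sp" using t unfolding D_def by simp
      then show ?thesis using that[of 0] True by simp
    next
      case False
      then have ne: "1/b - 1/a \<noteq> 0" using assms by (simp add: field_simps)
      have kne: "(1/b - 1/a)/2 \<noteq> 0" using ne by (simp only: divide_eq_0_iff) simp
      define w where "w = (t - M * sp) / ((1/b - 1/a)/2)"
      have Dp: "D = \<bar>(1/b - 1/a)/2\<bar>" unfolding D_def by (simp add: abs_minus_commute)
      have "\<bar>w\<bar> = \<bar>t - M * sp\<bar> / D" unfolding w_def Dp by (simp only: abs_divide)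
      also have "\<dots> \<le> c" proof - have "D > 0" using kne unfolding Dp by simp then show ?thesis using t by (simp add: pos_divide_le_eq mult.commute) qed
      finally have "\<bar>w\<bar> \<le> norm p * norm y" unfolding c_def by (simp add: mult.commute)
      moreover have "t = M * sp + (1/b - 1/a)/2 * w" unfolding w_def using kne by (simp only: times_divide_eq_right nonzero_mult_div_cancel_left) simp
      ultimately show ?thesis by (rule that)
    qed
    obtain R where R: "orthogonal_matrix R" and Rw: "(R *v p)$1 * (R *v y)$1 - (R *v p)$2 * (R *v y)$2 = w"
      using rot[OF w(1)] by blast
    define x where "x = (R *v p)$1 * (R *v y)$1"
    define z where "z = (R *v p)$2 * (R *v y)$2"
    have sx: "x + z = sp" using xz[OF R] unfolding x_def z_def by auto
    have wx: "x - z = w" using Rw unfolding x_def z_def .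
    define f where "f n = Gfun a b y p R (inverse (real (Suc n)))" for n
    have fS: "f n \<in> ?S" for n unfolding f_def using R by force
    have "(\<lambda>n. (inverse (real (Suc n)) + 1) / (a * inverse (real (Suc n)) + b) * x
              + (inverse (real (Suc n)) + 1) / (a + b * inverse (real (Suc n))) * z)
          \<longlonglongrightarrow> (0 + 1) / (a * 0 + b) * x + (0 + 1) / (a + b * 0) * z"
      using assms by (intro tendsto_intros LIMSEQ_inverse_real_of_nat) auto
    moreover have "(0 + 1) / (a * 0 + b) * x + (0 + 1) / (a + b * 0) * z = t"
    proof -
      have hx: "x = (sp + w)/2" and hz: "z = (sp - w)/2" using sx wx by auto
      show ?thesis unfolding w(2) M_def hx hz using assms by (simp add: field_simps)
    qed
    ultimately have "f \<longlonglongrightarrow> t" unfolding f_def G_eq x_def z_def by simp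
    then show "t \<in> closure ?S" unfolding closure_sequential using fS by blast
  qed
  ultimately show ?thesis by blast
qed
end
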